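(* Let $p,q\ge 1$ be coprime integers, $n=p+q$, and let $\mathsf{T}_c$ be the lower Christoffel word of length $n$ determined by $p$ and $q$. Then $\mathsf{SA}_{\mathsf{T}_c}$ is the arithmetically progressed permutation with first entry $\mathsf{SA}_{\mathsf{T}_c}[1]=1$ and ratio $k=q^{-1}$, the multiplicative inverse of $q$ modulo $n$. Equivalently, $\mathsf{T}_c$ equals the binary string $\mathsf{T}$ defined by $\mathsf{T}[i]=\mathtt{a}$ if $i\in\{P[1],\ldots,P[s]\}$ and $\mathtt{b}$ otherwise, where $P$ is that permutation and $s$ is the index with $P[s]=n-k$.
   Context: Alphabet $\{\mathtt{a}<\mathtt{b}\}$; lexicographic order with a proper prefix smaller than the longer string; suffix array $\mathsf{SA}_{\mathsf{T}}$: permutation of $[1..n]$ such that $\mathsf{T}[\mathsf{SA}_{\mathsf{T}}[i]..n]$ is the $i$-th smallest suffix. $x\bmod n$ denotes the representative of $x$ modulo $n$ in $[1..n]$; $x\operatorname{mod}_0 n$ denotes the representative in $[0..n-1]$. An arithmetically progressed permutation of length $n$ with ratio $k\in[1..n-1]$ is a permutation $P$ of $[1..n]$ with $P[i+1]=P[i]+k\bmod n$. Lower Christoffel word determined by coprime $p,q\ge1$: the string $\mathsf{T}_c$ of length $n=p+q$ with, for $i\in[1..n]$, $\mathsf{T}_c[i]=\mathtt{a}$ if $(i-1)q\operatorname{mod}_0 n< iq\operatorname{mod}_0 n$ and $\mathsf{T}_c[i]=\mathtt{b}$ otherwise. (Geometrically, this is the lattice path from $(0,0)$ to $(p,q)$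 with $\mathtt{a}$ = unit step right and $\mathtt{b}$ = unit step up, lying below the segment from $(0,0)$ to $(p,q)$ and enclosing with it no lattice points.) *)

theory Defs
  imports Main
begin

datatype letter = la | lb

(* strings are lists of letters; position i (1-based) of T is T ! (i - 1) *)

(* lexicographic order, proper prefix smaller than the longer string *)
definition lex_less :: "letter list \<Rightarrow> letter list \<Rightarrow> bool" where
  "lex_less xs ys \<longleftrightarrow> (xs, ys) \<in> lexord {(la, lb)}"

definition suffix_from :: "letter list \<Rightarrow> nat \<Rightarrow> letter list" where
  "suffix_from T i = drop (i - 1) T"

(* SA is a suffix array of T: a permutation of [1..n] (as a list, SA ! (i-1) = SA[i])
   listing the starting positions of suffixes in increasing lexicographic order *)
definition is_suffix_array :: "letter list \<Rightarrow> nat list \<Rightarrow> bool" where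
  "is_suffix_array T SA \<longleftrightarrow>
     length SA = length T \<and> set SA = {1..length T} \<and>
     (\<forall>i j. i < j \<and> j < length SA \<longrightarrow>
        lex_less (suffix_from T (SA ! i)) (suffix_from T (SA ! j)))"

definition suffix_array :: "letter list \<Rightarrow> nat list" where
  "suffix_array T = (THE SA. is_suffix_array T SA)"

definition mod1 :: "nat \<Rightarrow> nat \<Rightarrow> nat" where
  "mod1 x n = (if x mod n = 0 then n else x mod n)"

fun ap_seq :: "nat \<Rightarrow> nat \<Rightarrow> nat \<Rightarrow> nat \<Rightarrow> nat list" where
  "ap_seq n f k 0 = []"
| "ap_seq n f k (Suc m) = f # ap_seq n (mod1 (f + k) n) k m"

definition ap_perm :: "nat \<Rightarrow> nat \<Rightarrow> nat \<Rightarrow> nat list" where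
  "ap_perm n f k = ap_seq n f k n"

definition christoffel :: "nat \<Rightarrow> nat \<Rightarrow> letter list" where
  "christoffel p q = (let n = p + q in
     map (\<lambda>i. if ((i - 1) * q) mod n < (i * q) mod n then la else lb) [1..<n+1])"

end

theory Submission
  imports Defs
begin

lemma lex_less_irrefl: "\<not> lex_less xs xs"
  unfolding lex_less_def by (rule lexord_irreflexive) auto

lemma lex_less_asym: "lex_less xs ys \<Longrightarrow> \<not> lex_less ys xs"
  unfolding lex_less_def
  by (rule lexord_asymmetric) (auto intro: asymI)

lemma mod1_mod: "mod1 x n mod n = x mod n"
  by (simp add: mod1_def)

lemma mod1_cong: "x mod n = y mod n \<Longrightarrow> mod1 x n = mod1 y n"
  by (simp add: mod1_def)

lemma mod1_range: "n > 0 \<Longrightarrow> mod1 x n \<in> {1..n}"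
  by (auto simp: mod1_def intro: less_imp_le)

lemma length_ap_seq: "length (ap_seq n f k l) = l"
  by (induction l arbitrary: f) auto

lemma ap_seq_nth:
  "n > 0 \<Longrightarrow> f \<in> {1..n} \<Longrightarrow> m < l \<Longrightarrow> ap_seq n f k l ! m = mod1 (f + m*k) n"
proof (induction l arbitrary: f m)
  case 0 thus ?case by simp
next
  case (Suc l)
  show ?case
  proof (cases m)
    case 0
    then show ?thesis using Suc.prems
      by (cases "f = n") (auto simp: mod1_def)
  next
    case (Suc m')
    have "ap_seq n f k (Suc l) ! m = ap_seq n (mod1 (f+k) n) k l ! m'"
      using Suc by simp
    also have "\<dots> = mod1 (mod1 (f+k) n + m'*k) n"
      using Suc.IH[of "mod1 (f+k) n" m'] Suc.prems Suc mod1_range by auto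
    also have "\<dots> = mod1 (f + m*k) n"
    proof (rule mod1_cong)
      have "(mod1 (f+k) n + m'*k) mod n = (mod1 (f+k) n mod n + m'*k) mod n"
        by (simp add: mod_add_left_eq)
      also have "\<dots> = ((f+k) mod n + m'*k) mod n" by (simp add: mod1_mod)
      also have "\<dots> = (f + m*k) mod n" using Suc by (simp add: mod_add_left_eq add.assoc)
      finally show "(mod1 (f+k) n + m'*k) mod n = (f + m*k) mod n" .
    qed
    finally show ?thesis .
  qed
qed

lemma cancel1: "n > (0::nat) \<Longrightarrow> (a+1) mod n = (b+1) mod n \<Longrightarrow> a mod n = b mod n"
proof -
  assume n: "n > 0" and e: "(a+1) mod n = (b+1) mod n"
  have "a mod n = (a + 1 + (n-1)) mod n" using n by simp
  also have "\<dots> = ((a + 1) mod n + (n-1)) mod n" by (simp add: mod_add_left_eq)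
  also have "\<dots> = ((b + 1) mod n + (n-1)) mod n" using e by simp
  also have "\<dots> = (b + 1 + (n-1)) mod n" by (simp add: mod_add_left_eq)
  also have "\<dots> = b mod n" using n by simp
  finally show ?thesis .
qed

locale chr =
  fixes p q k :: nat
  assumes p1: "p \<ge> 1" and q1: "q \<ge> 1"
    and kq: "(k * q) mod (p + q) = 1"
begin

abbreviation "n \<equiv> p + q"

definition w :: "nat \<Rightarrow> letter" where
  "w m = (if (m*q) mod n < p then la else lb)"

definition key :: "nat \<Rightarrow> nat" where
  "key a = ((a - 1) * q) mod n"

lemma npos: "n > 0" using p1 by simp

lemma chr_eq: "christoffel p q = map w [0..<n]"
proof (rule nth_equalityI)
  show "length (christoffel p q) = length (map w [0..<n])"
    by (simp add: christoffel_def Let_def del: upt_Suc)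
next
  fix i assume "i < length (christoffel p q)"
  then have i: "i < n" by (simp add: christoffel_def Let_def del: upt_Suc)
  define x where "x = (i*q) mod n"
  have xl: "x < n" using npos x_def by simp
  have e: "((i+1)*q) mod n = (x + q) mod n"
    by (simp add: x_def mod_add_left_eq mod_add_right_eq algebra_simps)
  have "christoffel p q ! i = (if x < ((i+1)*q) mod n then la else lb)"
    using i by (simp add: christoffel_def Let_def x_def nth_append del: upt_Suc)
  also have "\<dots> = w i"
  proof (cases "x < p")
    case True
    then have "(x+q) mod n = x + q" by simp
    then show ?thesis using True e q1 by (simp add: w_def x_def)
  next
    case False
    then have "(x+q) mod n = x - p" using xl
      by (simp add: mod_if)
    then show ?thesis using False e p1 by (simp add: w_def x_def)
  qed
  finally show "christoffel p q ! i = map w [0..<n] ! i" using i by simp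
qed

lemma lex_main:
  "i \<le> n \<Longrightarrow> j \<le> n \<Longrightarrow> (i*q) mod n < (j*q) mod n \<Longrightarrow>
    lex_less (map w [i..<n]) (map w [j..<n])"
proof (induction "n - i" arbitrary: i j)
  case 0
  then have "i = n" by simp
  then have "j \<noteq> n" using 0 by auto
  then show ?case using \<open>i = n\<close> 0 by (simp add: lex_less_def upt_conv_Cons)
next
  case (Suc d)
  have i: "i < n" using Suc by simp
  have "j \<noteq> n" using Suc by auto
  then have j: "j < n" using Suc by simp
  define x where "x = (i*q) mod n"
  define y where "y = (j*q) mod n"
  have xy: "x < y" using Suc x_def y_def by simp
  have yl: "y < n" using npos y_def by simp
  have ex: "((i+1)*q) mod n = (x + q) mod n"
    by (simp add: x_def mod_add_left_eq mod_add_right_eq algebra_simps)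
  have ey: "((j+1)*q) mod n = (y + q) mod n"
    by (simp add: y_def mod_add_left_eq mod_add_right_eq algebra_simps)
  have L: "map w [i..<n] = w i # map w [i+1..<n]" "map w [j..<n] = w j # map w [j+1..<n]"
    using i j by (simp_all add: upt_conv_Cons)
  show ?case
  proof (cases "w i = w j")
    case False
    then have "w i = la" "w j = lb" using xy by (auto simp: w_def x_def y_def split: if_splits)
    then show ?thesis using L by (simp add: lex_less_def)
  next
    case True
    have "((i+1)*q) mod n < ((j+1)*q) mod n"
    proof (cases "x < p")
      case True
      then have "y < p" using \<open>w i = w j\<close> by (auto simp: w_def x_def y_def split: if_splits)
      then show ?thesis using ex ey True xy by simp
    next
      case False
      then have "\<not> y < p" using xy by simp
      then have "(x+q) mod n = x - p" "(y+q) mod n = y - p" using False yl xy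
        by (simp_all add: mod_if)
      then show ?thesis using ex ey False xy by simp
    qed
    then have "lex_less (map w [i+1..<n]) (map w [j+1..<n])"
      using Suc.hyps(1)[of "i+1" "j+1"] Suc.hyps(2) i j by simp
    then show ?thesis using L True by (simp add: lex_less_def)
  qed
qed

lemma suffix_w: "a \<ge> 1 \<Longrightarrow> suffix_from (christoffel p q) a = map w [a-1..<n]"
  by (simp add: suffix_from_def chr_eq drop_map)

lemma key_lt: "a \<in> {1..n} \<Longrightarrow> b \<in> {1..n} \<Longrightarrow> key a < key b \<Longrightarrow>
   lex_less (suffix_from (christoffel p q) a) (suffix_from (christoffel p q) b)"
  using lex_main[of "a-1" "b-1"] by (auto simp: suffix_w key_def)

lemma key_inj: "a \<in> {1..n} \<Longrightarrow> b \<in> {1..n} \<Longrightarrow> key a = key b \<Longrightarrow> a = b"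
proof -
  assume a: "a \<in> {1..n}" and b: "b \<in> {1..n}" and e: "key a = key b"
  have "((a-1)*q*k) mod n = ((b-1)*q*k) mod n"
    using e unfolding key_def by (metis mod_mult_left_eq)
  then have "((a-1)*((k*q) mod n)) mod n = ((b-1)*((k*q) mod n)) mod n"
    by (metis mod_mult_right_eq mult.assoc mult.commute)
  then have "(a-1) mod n = (b-1) mod n" using kq by simp
  moreover have "a - 1 < n" "b - 1 < n" using a b by auto
  ultimately have "a - 1 = b - 1" by simp
  moreover have "1 \<le> a" "1 \<le> b" using a b by simp_all
  ultimately show "a = b" by linarith
qed

lemma key_range: "key a < n"
  using npos by (simp add: key_def)

definition P where "P = ap_perm n 1 k"

lemma P_len: "length P = n" by (simp add: P_def ap_perm_def length_ap_seq)

lemma P_nth: "m < n \<Longrightarrow> P ! m = mod1 (1 + m*k) n"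
  unfolding P_def ap_perm_def by (rule ap_seq_nth) (use npos in auto)

lemma P_range: "m < n \<Longrightarrow> P ! m \<in> {1..n}"
  using P_nth mod1_range npos by simp

lemma key_P: "m < n \<Longrightarrow> key (P ! m) = m"
proof -
  assume m: "m < n"
  define c where "c = P ! m"
  have c1: "c \<ge> 1" using P_range[OF m] c_def by simp
  have "c = mod1 (1 + m*k) n" using P_nth[OF m] c_def by simp
  then have "c mod n = (1 + m*k) mod n" using mod1_mod by simp
  moreover have "c = (c - 1) + 1" using c1 by simp
  ultimately have "((c-1) + 1) mod n = (m*k + 1) mod n" by (simp only: add.commute)
  then have cm: "(c-1) mod n = (m*k) mod n"
    by (rule cancel1[OF npos])
  have "((c-1)*q) mod n = (((c-1) mod n)*q) mod n" by (rule mod_mult_left_eq[symmetric])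
  also have "\<dots> = (((m*k) mod n)*q) mod n" by (simp only: cm)
  also have "\<dots> = (m*k*q) mod n" by (rule mod_mult_left_eq)
  also have "\<dots> = (m*(k*q)) mod n" by (simp only: mult.assoc)
  also have "\<dots> = (m*((k*q) mod n)) mod n" by (rule mod_mult_right_eq[symmetric])
  also have "\<dots> = m" using kq m by simp
  finally show ?thesis by (simp add: key_def c_def)
qed

lemma P_is: "is_suffix_array (christoffel p q) P"
  unfolding is_suffix_array_def
proof (intro conjI allI impI)
  show "length P = length (christoffel p q)" by (simp add: P_len chr_eq)
  show "set P = {1..length (christoffel p q)}"
  proof
    show "set P \<subseteq> {1..length (christoffel p q)}"
      using P_range by (auto simp: in_set_conv_nth P_len chr_eq)
    show "{1..length (christoffel p q)} \<subseteq> set P"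
    proof
      fix a assume a: "a \<in> {1..length (christoffel p q)}"
      then have a': "a \<in> {1..n}" by (simp add: chr_eq)
      have "P ! key a = a"
        using key_inj[OF P_range[OF key_range] a'] key_P[OF key_range] by simp
      then show "a \<in> set P" by (metis P_len key_range nth_mem)
    qed
  qed
  fix i j assume "i < j \<and> j < length P"
  then show "lex_less (suffix_from (christoffel p q) (P ! i)) (suffix_from (christoffel p q) (P ! j))"
    using key_lt[OF P_range P_range] key_P P_len by simp
qed

lemma unique: "is_suffix_array (christoffel p q) SA \<Longrightarrow> SA = P"
proof -
  assume S: "is_suffix_array (christoffel p q) SA"
  have len: "length SA = n" and st: "set SA = {1..n}"
    using S by (auto simp: is_suffix_array_def chr_eq)
  have srt: "\<And>i j. i < j \<Longrightarrow> j < n \<Longrightarrow> lex_less (suffix_from (christoffel p q) (SA ! i)) (suffix_from (christoffel p q) (SA ! j))"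
    using S len by (auto simp: is_suffix_array_def)
  have inS: "\<And>i. i < n \<Longrightarrow> SA ! i \<in> {1..n}"
  proof -
    fix i assume "i < n"
    then have "SA ! i \<in> set SA" using len by simp
    then show "SA ! i \<in> {1..n}" using st by simp
  qed
  have kl: "key (SA ! i) < key (SA ! j)" if "i < j" "j < n" for i j
  proof (rule ccontr)
    assume "\<not> ?thesis"
    then consider "key (SA ! j) < key (SA ! i)" | "key (SA ! j) = key (SA ! i)" by linarith
    then show False
    proof cases
      case 1
      have "i < n" using that by simp
      have "lex_less (suffix_from (christoffel p q) (SA ! j)) (suffix_from (christoffel p q) (SA ! i))"
        by (rule key_lt[OF inS[OF \<open>j < n\<close>] inS[OF \<open>i < n\<close>] 1])
      then show False using lex_less_asym[OF srt[OF that]] by contradiction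
    next
      case 2
      have "i < n" using that by simp
      have "SA ! j = SA ! i" using key_inj[OF inS[OF \<open>j < n\<close>] inS[OF \<open>i < n\<close>] 2] .
      then show False using srt[OF that] lex_less_irrefl by simp
    qed
  qed
  have "sorted_wrt (<) (map key SA)"
    using kl len by (simp add: sorted_wrt_iff_nth_less)
  moreover have "set (map key SA) = set [0..<n]"
  proof
    show "set (map key SA) \<subseteq> set [0..<n]" using key_range by auto
    show "set [0..<n] \<subseteq> set (map key SA)"
    proof
      fix m assume "m \<in> set [0..<n]"
      then have m: "m < n" by simp
      then have "P ! m \<in> set SA" using P_range st by simp
      then show "m \<in> set (map key SA)" using key_P[OF m] by force
    qed
  qed
  ultimately have mk: "map key SA = [0..<n]" by (rule strict_sorted_equal[OF sorted_wrt_upt])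
  show "SA = P"
  proof (rule nth_equalityI)
    show "length SA = length P" using len P_len by simp
    fix i assume "i < length SA"
    then have i: "i < n" using len by simp
    have "key (SA ! i) = map key SA ! i" using i len by simp
    also have "\<dots> = [0..<n] ! i" by (simp only: mk)
    also have "\<dots> = i" using i by simp
    finally have "key (SA ! i) = i" .
    then show "SA ! i = P ! i" using key_inj[OF inS[OF i] P_range[OF i]] key_P[OF i] by simp
  qed
qed

lemma sa: "suffix_array (christoffel p q) = P"
  unfolding suffix_array_def using P_is unique by (rule the_equality)

lemma key_nk: "k \<in> {1..n-1} \<Longrightarrow> key (n-k) = p - 1"
proof -
  assume kr: "k \<in> {1..n-1}"
  define A where "A = (n-k-1)*q"
  define X where "X = A mod n + 1 + q"
  have nn: "(n-k-1) + k + 1 = n" using kr by auto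
  have "A + k*q + q = ((n-k-1) + k + 1)*q" unfolding A_def by (simp add: add_mult_distrib)
  also have "\<dots> = n*q" by (simp only: nn)
  finally have e1: "A + k*q + q = n*q" .
  have "X mod n = (A mod n + (k*q) mod n + q) mod n" unfolding X_def by (simp only: kq)
  also have "\<dots> = ((A mod n + (k*q) mod n) mod n + q) mod n" by (rule mod_add_left_eq[symmetric])
  also have "\<dots> = ((A + k*q) mod n + q) mod n" by (simp only: mod_add_eq)
  also have "\<dots> = (A + k*q + q) mod n" by (rule mod_add_left_eq)
  also have "\<dots> = (n*q) mod n" by (simp only: e1)
  also have "\<dots> = 0" by simp
  finally have z: "X mod n = 0" .
  have am: "A mod n < n" using npos by simp
  have "\<not> X < n"
  proof
    assume "X < n"
    then have "X mod n = X" by simp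
    then show False using z X_def by simp
  qed
  moreover have "X - n < n" using am X_def p1 by linarith
  ultimately have "X mod n = X - n" by (simp add: mod_if)
  then have "X = n" using z \<open>\<not> X < n\<close> by linarith
  then have "A mod n = p - 1" unfolding X_def using p1 by linarith
  moreover have "key (n-k) = A mod n" unfolding key_def A_def by (simp add: diff_diff_left)
  ultimately show ?thesis by simp
qed

lemma part2:
  assumes "christoffel p q = map w [0..<n]"
  shows "christoffel p q =
     map (\<lambda>i. if i \<in> {P ! (j - 1) | j. j \<in> {1..p}} then la else lb) [1..<n + 1]"
proof (rule nth_equalityI)
  show "length (christoffel p q) = length (map (\<lambda>i. if i \<in> {P ! (j - 1) | j. j \<in> {1..p}} then la else lb) [1..<n + 1])"
    using assms by (simp del: upt_Suc)
next
  fix i assume "i < length (christoffel p q)"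
  then have i: "i < n" using assms by simp
  have ki: "key (i+1) = (i*q) mod n" by (simp add: key_def)
  have r: "i + 1 \<in> {1..n}" using i by simp
  have "(i + 1 \<in> {P ! (j - 1) | j. j \<in> {1..p}}) \<longleftrightarrow> key (i+1) < p"
  proof
    assume "i + 1 \<in> {P ! (j - 1) | j. j \<in> {1..p}}"
    then obtain j where j: "j \<in> {1..p}" "i + 1 = P ! (j-1)" by blast
    then have "j - 1 < n" using q1 by auto
    then have "key (i+1) = j - 1" using key_P j by simp
    then show "key (i+1) < p" using j by auto
  next
    assume kl: "key (i+1) < p"
    define m where "m = key (i+1)"
    have mn: "m < n" using key_range m_def by simp
    have "P ! m = i + 1" using key_inj[OF P_range[OF mn] r] key_P[OF mn] m_def by simp
    moreover have "m + 1 \<in> {1..p}" using kl m_def by simp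
    ultimately show "i + 1 \<in> {P ! (j - 1) | j. j \<in> {1..p}}" by force
  qed
  then have iff: "(i + 1 \<in> {P ! (j - 1) | j. j \<in> {1..p}}) \<longleftrightarrow> (i*q) mod n < p" using ki by simp
  have c: "christoffel p q ! i = w i" using assms i by simp
  have "i < length [1..<n + 1]" using i by (simp del: upt_Suc)
  then have mm: "map (\<lambda>i. if i \<in> {P ! (j - 1) | j. j \<in> {1..p}} then la else lb) [1..<n + 1] ! i
       = (if i + 1 \<in> {P ! (j - 1) | j. j \<in> {1..p}} then la else lb)"
  proof -
    have e: "[1..<n+1] ! i = 1 + i" by (rule nth_upt) (use i in linarith)
    show ?thesis using nth_map[OF \<open>i < length [1..<n + 1]\<close>] e by (simp only: add.commute)
  qed
  have "christoffel p q ! i = (if i + 1 \<in> {P ! (j - 1) | j. j \<in> {1..p}} then la else lb)"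
    unfolding c w_def by (simp only: iff)
  then show "christoffel p q ! i = map (\<lambda>i. if i \<in> {P ! (j - 1) | j. j \<in> {1..p}} then la else lb) [1..<n + 1] ! i"
    unfolding mm .
qed

end

theorem theorem12:
  fixes p q k :: nat
  assumes "p \<ge> 1" and "q \<ge> 1" and "coprime p q"
    and "k \<in> {1..p + q - 1}" and "(k * q) mod (p + q) = 1"
  shows "suffix_array (christoffel p q) = ap_perm (p + q) 1 k
       \<and> (\<forall>s \<in> {1..p + q}. ap_perm (p + q) 1 k ! (s - 1) = p + q - k \<longrightarrow>
            christoffel p q =
              map (\<lambda>i. if i \<in> {ap_perm (p + q) 1 k ! (j - 1) | j. j \<in> {1..s}} then la else lb)
                  [1..<p + q + 1])"
proof -
  interpret chr p q k using assms by unfold_locales auto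
  have sa': "suffix_array (christoffel p q) = ap_perm (p + q) 1 k" using sa by (simp add: P_def)
  show ?thesis
  proof (intro conjI ballI impI)
    show "suffix_array (christoffel p q) = ap_perm (p + q) 1 k" by (rule sa')
    fix s assume s: "s \<in> {1..p + q}" and e: "ap_perm (p + q) 1 k ! (s - 1) = p + q - k"
    have "key (P ! (s-1)) = s - 1" using key_P s by auto
    moreover have "key (P ! (s-1)) = p - 1" using e key_nk assms(4) by (simp add: P_def)
    ultimately have "s = p" using s p1 by auto
    show "christoffel p q =
              map (\<lambda>i. if i \<in> {ap_perm (p + q) 1 k ! (j - 1) | j. j \<in> {1..s}} then la else lb)
                  [1..<p + q + 1]"
      unfolding \<open>s = p\<close> by (rule part2[OF chr_eq, unfolded P_def])
  qed
qed

end
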